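(* Let $\mathcal S,\mathcal P\subseteq\mathcal G$ be group properties with $\mathcal P\subseteq\mathcal S$. If for every $G\in\mathcal S$ there is some $H\in\mathcal P$ such that $\overline G$ can be embedded into $\overline H$, then $\mathcal P$ is dense in $\mathcal S$.
   Context: Let $\mathbb N=\{1,2,3,\dots\}$. Equip $\mathbb N^{\mathbb N\times\mathbb N}$ with the product topology of the discrete topology on $\mathbb N$. Let $\mathcal G$ be the subspace consisting of those $A\in\mathbb N^{\mathbb N\times\mathbb N}$ that are the multiplication table of a group on the underlying set $\mathbb N$ whose identity element is $1$. For $G\in\mathcal G$, $\overline G$ denotes the group on $\mathbb N$ with multiplication table $G$. A group property is a subset $\mathcal P\subseteq\mathcal G$ invariant under isomorphism: if $G\in\mathcal G$, $H\in\mathcal P$ and $\overline G\cong\overline H$ then $G\in\mathcal P$. *)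

theory Defs
  imports "HOL-Analysis.Analysis" "HOL-Algebra.Group"
begin

definition Npos :: "nat set" where "Npos = {1..}"

text \<open>The space N^(N x N) with the product of discrete topologies
  (functions are extensional: undefined outside N x N).\<close>
definition table_space :: "(nat \<times> nat \<Rightarrow> nat) topology" where
  "table_space = product_topology (\<lambda>_. discrete_topology Npos) (Npos \<times> Npos)"

definition group_of :: "(nat \<times> nat \<Rightarrow> nat) \<Rightarrow> nat monoid" where
  "group_of A = \<lparr>carrier = Npos, mult = (\<lambda>x y. A (x, y)), one = 1\<rparr>"

definition calG :: "(nat \<times> nat \<Rightarrow> nat) set" where
  "calG = {A \<in> topspace table_space. group (group_of A)}"

definition group_property :: "(nat \<times> nat \<Rightarrow> nat) set \<Rightarrow> bool" where
  "group_property P \<longleftrightarrow> P \<subseteq> calG \<and>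
     (\<forall>G \<in> calG. \<forall>H \<in> P. group_of G \<cong> group_of H \<longrightarrow> G \<in> P)"

definition embeds_into :: "(nat \<times> nat \<Rightarrow> nat) \<Rightarrow> (nat \<times> nat \<Rightarrow> nat) \<Rightarrow> bool" where
  "embeds_into G H \<longleftrightarrow>
     (\<exists>h. h \<in> hom (group_of G) (group_of H) \<and> inj_on h (carrier (group_of G)))"

text \<open>P is dense in S, where S carries the subspace topology inherited from G
  (equivalently from the table space).\<close>
definition dense_in :: "(nat \<times> nat \<Rightarrow> nat) set \<Rightarrow> (nat \<times> nat \<Rightarrow> nat) set \<Rightarrow> bool" where
  "dense_in P S \<longleftrightarrow> S \<subseteq> (subtopology table_space S) closure_of P"

end

theory Submission
  imports Defs
begin

lemma Npos_infinite: "infinite Npos"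
proof
  assume "finite Npos"
  then have "Suc (Max Npos) \<in> Npos \<Longrightarrow> Suc (Max Npos) \<le> Max Npos" by (rule Max_ge)
  then show False by (simp add: Npos_def)
qed

lemma Npos_infinite_diff: "finite K \<Longrightarrow> infinite (Npos - K)"
  using Npos_infinite by simp

lemma extend_bij:
  assumes "finite K" "K \<subseteq> Npos" "inj_on h K" "h ` K \<subseteq> Npos"
  shows "\<exists>\<tau>. bij_betw \<tau> Npos Npos \<and> (\<forall>x\<in>K. \<tau> x = h x)"
proof -
  let ?A = "Npos - K" and ?B = "Npos - h ` K"
  have iA: "infinite ?A" using assms(1) by (rule Npos_infinite_diff)
  have iB: "infinite ?B" using Npos_infinite_diff[of "h ` K"] assms(1) by simp
  define g where "g = enumerate ?B \<circ> inv_into UNIV (enumerate ?A)"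
  have bA: "bij_betw (enumerate ?A) UNIV ?A" using bij_enumerate[OF iA] .
  have bB: "bij_betw (enumerate ?B) UNIV ?B" using bij_enumerate[OF iB] .
  have bg: "bij_betw g ?A ?B" unfolding g_def
    using bij_betw_trans[OF bij_betw_inv_into[OF bA] bB] .
  define \<tau> where "\<tau> = (\<lambda>x. if x \<in> K then h x else g x)"
  have b1: "bij_betw \<tau> K (h ` K)"
    using assms(3) by (simp add: \<tau>_def bij_betw_def inj_on_def image_def)
  have b2: "bij_betw \<tau> ?A ?B"
    using bg by (rule bij_betw_cong[THEN iffD1, rotated]) (simp add: \<tau>_def)
  have "bij_betw \<tau> (K \<union> ?A) (h ` K \<union> ?B)"
    by (rule bij_betw_combine[OF b1 b2]) auto
  moreover have "K \<union> ?A = Npos" "h ` K \<union> ?B = Npos" using assms by auto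
  ultimately show ?thesis by (auto simp: \<tau>_def)
qed

lemma key:
  assumes G: "G \<in> calG" and H: "H \<in> calG" and e: "embeds_into G H"
    and Ff: "finite F" and FN: "F \<subseteq> Npos \<times> Npos"
  shows "\<exists>H'\<in>calG. group_of H' \<cong> group_of H \<and> (\<forall>i\<in>F. H' i = G i)"
proof -
  have gG: "group (group_of G)" and gH: "group (group_of H)" using G H by (auto simp: calG_def)
  have topsp: "topspace table_space = PiE (Npos\<times>Npos) (\<lambda>_. Npos)" by (simp add: table_space_def)
  obtain h where hh: "h \<in> hom (group_of G) (group_of H)" and hi: "inj_on h Npos"
    using e by (auto simp: embeds_into_def group_of_def)
  have hgh: "group_hom (group_of G) (group_of H) h"
    using gG gH hh by (simp add: group_hom_def group_hom_axioms_def)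
  have h1: "h 1 = 1" using group_hom.hom_one[OF hgh] by (simp add: group_of_def)
  have hN: "\<And>x. x \<in> Npos \<Longrightarrow> h x \<in> Npos" using hh by (auto simp: hom_def group_of_def)
  have hm: "\<And>x y. x \<in> Npos \<Longrightarrow> y \<in> Npos \<Longrightarrow> h (G (x,y)) = H (h x, h y)"
    using hh by (auto simp: hom_def group_of_def)
  have Gc: "\<And>x y. x \<in> Npos \<Longrightarrow> y \<in> Npos \<Longrightarrow> G (x,y) \<in> Npos"
    using monoid.m_closed[OF group.is_monoid[OF gG]] by (auto simp: group_of_def)
  have Hc: "\<And>x y. x \<in> Npos \<Longrightarrow> y \<in> Npos \<Longrightarrow> H (x,y) \<in> Npos"
    using monoid.m_closed[OF group.is_monoid[OF gH]] by (auto simp: group_of_def)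
  have one: "(1::nat) \<in> Npos" by (simp add: Npos_def)
  define K where "K = {1} \<union> fst ` F \<union> snd ` F \<union> (\<lambda>p. G p) ` F"
  have Kf: "finite K" using Ff by (simp add: K_def)
  have KN: "K \<subseteq> Npos" using FN Gc one by (auto simp: K_def)
  have hK: "h ` K \<subseteq> Npos" using KN hN by auto
  obtain \<tau> where bt: "bij_betw \<tau> Npos Npos" and tK: "\<forall>x\<in>K. \<tau> x = h x"
    using extend_bij[OF Kf KN inj_on_subset[OF hi KN] hK] by blast
  define \<sigma> where "\<sigma> = inv_into Npos \<tau>"
  have bs: "bij_betw \<sigma> Npos Npos" using bij_betw_inv_into[OF bt] by (simp add: \<sigma>_def)
  have ts: "\<And>x. x\<in>Npos \<Longrightarrow> \<tau> (\<sigma> x) = x" using bij_betw_inv_into_right[OF bt] by (simp add: \<sigma>_def)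
  have st: "\<And>x. x\<in>Npos \<Longrightarrow> \<sigma> (\<tau> x) = x" using bij_betw_inv_into_left[OF bt] by (simp add: \<sigma>_def)
  have tN: "\<And>x. x\<in>Npos \<Longrightarrow> \<tau> x \<in> Npos" using bt by (auto simp: bij_betw_def)
  have sN: "\<And>x. x\<in>Npos \<Longrightarrow> \<sigma> x \<in> Npos" using bs by (auto simp: bij_betw_def)
  define H' where "H' = (\<lambda>p. if fst p \<in> Npos \<and> snd p \<in> Npos then \<sigma> (H (\<tau> (fst p), \<tau> (snd p))) else undefined)"
  have s1: "\<sigma> 1 = 1" using st[OF one] tK h1 by (simp add: K_def)
  have iso: "\<sigma> \<in> iso (group_of H) (group_of H')"
    unfolding iso_def hom_def using bs by (auto simp: group_of_def H'_def ts sN)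
  have gH': "group (group_of H')" using group.iso_imp_img_group[OF gH iso] s1 by (simp add: group_of_def)
  have H'top: "H' \<in> topspace table_space" unfolding topsp
    by (auto simp: PiE_iff extensional_def H'_def sN tN Hc)
  have inG: "H' \<in> calG" using H'top gH' by (simp add: calG_def)
  have isoH: "group_of H' \<cong> group_of H" using group.iso_sym[OF gH is_isoI[OF iso]] .
  have agree: "\<forall>i\<in>F. H' i = G i"
  proof
    fix i assume i: "i \<in> F"
    obtain a b where ab: "i = (a,b)" by force
    have aK: "a \<in> K" "b \<in> K" "G (a,b) \<in> K" using i ab by (force simp: K_def)+
    have aN: "a \<in> Npos" "b \<in> Npos" using aK KN by auto
    have "H' i = \<sigma> (H (h a, h b))" using aN aK tK by (simp add: H'_def ab)
    also have "\<dots> = \<sigma> (h (G (a,b)))" using hm aN by simp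
    also have "\<dots> = \<sigma> (\<tau> (G (a,b)))" using tK aK by simp
    also have "\<dots> = G i" using st Gc aN ab by simp
    finally show "H' i = G i" .
  qed
  show ?thesis using inG isoH agree by blast
qed

theorem lemma4p3:
  assumes "group_property S" and "group_property P" and "P \<subseteq> S"
    and "\<forall>G \<in> S. \<exists>H \<in> P. embeds_into G H"
  shows "dense_in P S"
  unfolding dense_in_def
proof
  fix G assume GS: "G \<in> S"
  have SG: "S \<subseteq> calG" and PG: "P \<subseteq> calG" using assms(1,2) by (auto simp: group_property_def)
  have Pinv: "\<And>G H. G \<in> calG \<Longrightarrow> H \<in> P \<Longrightarrow> group_of G \<cong> group_of H \<Longrightarrow> G \<in> P"
    using assms(2) by (auto simp: group_property_def)
  have Gc: "G \<in> calG" using GS SG by auto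
  obtain H where HP: "H \<in> P" and e: "embeds_into G H" using assms(4) GS by blast
  have topsp: "topspace table_space = PiE (Npos\<times>Npos) (\<lambda>_. Npos)" by (simp add: table_space_def)
  have Gt: "G \<in> topspace table_space" using Gc by (simp add: calG_def)
  show "G \<in> subtopology table_space S closure_of P"
    unfolding in_closure_of
  proof (intro conjI allI impI)
    show "G \<in> topspace (subtopology table_space S)" using Gt GS by simp
  next
    fix T assume T: "G \<in> T \<and> openin (subtopology table_space S) T"
    then obtain U where U: "openin table_space U" and TU: "T = U \<inter> S"
      by (auto simp: openin_subtopology)
    have "G \<in> U" using T TU by auto
    then obtain V where Vf: "finite {i \<in> Npos \<times> Npos. V i \<noteq> topspace (discrete_topology Npos)}"
      and GV: "G \<in> PiE (Npos \<times> Npos) V" and VU: "PiE (Npos \<times> Npos) V \<subseteq> U"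
      using U unfolding table_space_def openin_product_topology_alt by blast
    define F where "F = {i \<in> Npos \<times> Npos. V i \<noteq> Npos}"
    have Ff: "finite F" using Vf by (simp add: F_def)
    have FN: "F \<subseteq> Npos \<times> Npos" by (auto simp: F_def)
    obtain H' where H'c: "H' \<in> calG" and iso: "group_of H' \<cong> group_of H" and ag: "\<forall>i\<in>F. H' i = G i"
      using key[OF Gc PG[THEN subsetD, OF HP] e Ff FN] by blast
    have H'P: "H' \<in> P" using Pinv[OF H'c HP iso] .
    have H't: "H' \<in> PiE (Npos \<times> Npos) (\<lambda>_. Npos)" using H'c topsp by (simp add: calG_def)
    have "H' \<in> PiE (Npos \<times> Npos) V"
    proof (rule PiE_I)
      fix i assume i: "i \<in> Npos \<times> Npos"
      show "H' i \<in> V i"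
      proof (cases "i \<in> F")
        case True then show ?thesis using ag GV i by auto
      next
        case False then have "V i = Npos" using i by (auto simp: F_def)
        then show ?thesis using H't i by auto
      qed
    next
      fix i assume "i \<notin> Npos \<times> Npos" then show "H' i = undefined" using H't by auto
    qed
    then have "H' \<in> T" using VU TU H'P assms(3) by auto
    then show "\<exists>y. y \<in> P \<and> y \<in> T" using H'P by blast
  qed
qed

end
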